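(* Consider the two-route traffic model described in the context, under assumptions (A1)–(A6). Then the system is monotone: if $x_0,y_0\in\Omega$ satisfy $x_0\le y_0$ componentwise, then the corresponding solutions satisfy $x(t;x_0)\le x(t;y_0)$ componentwise for all $t\ge0$.
   Context: Two routes $i=1,2$ connect an origin to a destination. For each route there are positive parameters $B_i$, $C_i$, $F_i$ with $C_i<B_i$; the demand is a constant $\phi>0$. Set $v_i=F_i/C_i$ and $E_i=v_iB_i$. The state $x=(x_1,x_2)\in\Omega:=[0,B_1]\times[0,B_2]$ evolves by $\dot x_i=\min\{\phi R_i(x),S_i(x_i)\}-D_i(x_i)$, $i=1,2$, with $S_i(x_i)=F_i$ if $x_i<C_i$, $S_i(x_i)=\frac{F_i}{B_i-C_i}(B_i-x_i)$ otherwise; $D_i(x_i)=v_ix_i$ if $x_i<C_i$, $D_i(x_i)=F_i$ otherwise. Routing ratios: $R_i(x)=(1-\alpha)r_i^0+\alpha\, r_i(\tau(x))$, with $\alpha\in(0,1]$, $r_1^0,r_2^0\ge0$, $r_1^0+r_2^0=1$, $\tau(x)=(\tau_1(x_1),\tau_2(x_2))$, each $\tau_i$ $C^1$ and strictly increasing, $0\le r_i(\tau(x))\le1$, $r_1(\tau(x))+r_2(\tau(x))=1$ on $\Omega$, $x\mapsto r_i(\tau(x))$ globally Lipschitz and $C^1$ on $\Omega$. Assumptions: (A1) $\phi<F_1+F_2$; (A2)–(A3) as just listed; (A4) $\partial R_i/\partial\tau_j>0$ for $i\ne j$; (A5) $F_i>(1-\alpha)\phi r_i^0$; (A6) $\phi<E_i$,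 $i=1,2$. *)

theory Defs
  imports "HOL-Analysis.Analysis"
begin

definition supply_fn :: "real \<Rightarrow> real \<Rightarrow> real \<Rightarrow> real \<Rightarrow> real" where
  "supply_fn B C F x = (if x < C then F else F / (B - C) * (B - x))"

text \<open>Demand function D_i of a route, with v = F / C.\<close>
definition demand_fn :: "real \<Rightarrow> real \<Rightarrow> real \<Rightarrow> real" where
  "demand_fn C F x = (if x < C then (F / C) * x else F)"

definition Omega :: "real \<Rightarrow> real \<Rightarrow> (real \<times> real) set" where
  "Omega B1 B2 = {0..B1} \<times> {0..B2}"

definition routing ::
  "real \<Rightarrow> real \<Rightarrow> (real \<Rightarrow> real \<Rightarrow> real) \<Rightarrow> (real \<Rightarrow> real) \<Rightarrow> (real \<Rightarrow> real)
     \<Rightarrow> real \<times> real \<Rightarrow> real" where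
  "routing \<alpha> r0 r \<tau>1 \<tau>2 x = (1 - \<alpha>) * r0 + \<alpha> * r (\<tau>1 (fst x)) (\<tau>2 (snd x))"

definition traffic_field ::
  "real \<Rightarrow> real \<Rightarrow> real \<Rightarrow> real \<Rightarrow> real \<Rightarrow> real \<Rightarrow> real \<Rightarrow> real \<Rightarrow> real \<Rightarrow> real
   \<Rightarrow> (real \<Rightarrow> real \<Rightarrow> real) \<Rightarrow> (real \<Rightarrow> real \<Rightarrow> real) \<Rightarrow> (real \<Rightarrow> real) \<Rightarrow> (real \<Rightarrow> real)
   \<Rightarrow> real \<times> real \<Rightarrow> real \<times> real" where
  "traffic_field B1 C1 F1 B2 C2 F2 \<phi> \<alpha> r01 r02 r1 r2 \<tau>1 \<tau>2 x =
     (min (\<phi> * routing \<alpha> r01 r1 \<tau>1 \<tau>2 x) (supply_fn B1 C1 F1 (fst x)) - demand_fn C1 F1 (fst x),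
      min (\<phi> * routing \<alpha> r02 r2 \<tau>1 \<tau>2 x) (supply_fn B2 C2 F2 (snd x)) - demand_fn C2 F2 (snd x))"

definition C1_on :: "('a::real_normed_vector) set \<Rightarrow> ('a \<Rightarrow> 'b::real_normed_vector) \<Rightarrow> bool" where
  "C1_on S g \<longleftrightarrow> (\<exists>g'. (\<forall>x\<in>S. (g has_derivative blinfun_apply (g' x)) (at x within S))
                        \<and> continuous_on S g')"

definition is_solution ::
  "(real \<times> real \<Rightarrow> real \<times> real) \<Rightarrow> (real \<times> real) set \<Rightarrow> real \<times> real \<Rightarrow> (real \<Rightarrow> real \<times> real) \<Rightarrow> bool" where
  "is_solution f S x0 x \<longleftrightarrow> x 0 = x0 \<and>
     (\<forall>t\<ge>0. x t \<in> S \<and> (x has_vector_derivative f (x t)) (at t within {0..}))"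

end

theory Submission
  imports Defs
begin

lemma left_le:
  fixes h :: "real \<Rightarrow> real"
  assumes "isCont h t1" "t1 > 0" "\<And>t. 0 \<le> t \<Longrightarrow> t < t1 \<Longrightarrow> h t < 0"
  shows "h t1 \<le> 0"
proof -
  have "(h \<longlongrightarrow> h t1) (at_left t1)"
    using assms(1) by (simp add: isCont_def filterlim_at_split)
  moreover have "eventually (\<lambda>t. h t \<le> 0) (at_left t1)"
    unfolding eventually_at_left_field
    using assms(3) by (intro exI[of _ 0]) (auto simp: assms(2) less_imp_le)
  ultimately show ?thesis
    by (intro tendsto_upperbound) (auto simp: trivial_limit_at_left_real)
qed

lemma left_deriv:
  fixes h :: "real \<Rightarrow> real"
  assumes "(h has_real_derivative D) (at t1)" "t1 > 0" "h t1 \<ge> 0"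
    "\<And>t. 0 \<le> t \<Longrightarrow> t < t1 \<Longrightarrow> h t < 0"
  shows "D \<ge> 0"
proof (rule ccontr)
  assume "\<not> D \<ge> 0"
  then obtain d where d: "d > 0" "\<And>k. k > 0 \<Longrightarrow> k < d \<Longrightarrow> h t1 < h (t1 - k)"
    using DERIV_neg_dec_left[OF assms(1)] by force
  define k where "k = min (d/2) t1"
  have "k > 0" "k < d" "k \<le> t1" using d assms(2) by (auto simp: k_def)
  then have "h t1 < h (t1 - k)" "h (t1 - k) < 0" using d assms(4)[of "t1 - k"] by auto
  then show False using assms(3) by linarith
qed

lemma comparison:
  fixes pd qd pd' qd' :: "real \<Rightarrow> real" and K :: real
  assumes K: "K \<ge> 0"
  and der1: "\<And>t. t > 0 \<Longrightarrow> (pd has_real_derivative pd' t) (at t)"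
  and der2: "\<And>t. t > 0 \<Longrightarrow> (qd has_real_derivative qd' t) (at t)"
  and cont1: "continuous_on {0..} pd" and cont2: "continuous_on {0..} qd"
  and init: "pd 0 \<le> 0" "qd 0 \<le> 0"
  and b1: "\<And>t. t > 0 \<Longrightarrow> pd t \<ge> 0 \<Longrightarrow> pd' t \<le> K * (max 0 (pd t) + max 0 (qd t))"
  and b2: "\<And>t. t > 0 \<Longrightarrow> qd t \<ge> 0 \<Longrightarrow> qd' t \<le> K * (max 0 (pd t) + max 0 (qd t))"
  and t: "t \<ge> 0"
  shows "pd t \<le> 0 \<and> qd t \<le> 0"
proof -
  define Kb where "Kb = 2*K+1"
  have claim: "\<forall>s\<in>{0..T}. pd s < e * exp (Kb * s) \<and> qd s < e * exp (Kb * s)"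
    if e: "e > 0" and T: "T \<ge> 0" for e T
  proof (rule ccontr)
    assume nc: "\<not> ?thesis"
    define \<phi> where "\<phi> = (\<lambda>s. e * exp (Kb * s))"
    have \<phi>pos: "\<phi> s > 0" for s using e by (simp add: \<phi>_def)
    have \<phi>der: "(\<phi> has_real_derivative Kb * \<phi> s) (at s)" for s
      unfolding \<phi>_def by (auto intro!: derivative_eq_intros)
    define bad where "bad = {s\<in>{0..T}. pd s \<ge> \<phi> s \<or> qd s \<ge> \<phi> s}"
    have ne: "bad \<noteq> {}" using nc by (auto simp: bad_def \<phi>_def not_less)
    have bdd: "bdd_below bad" by (auto simp: bad_def bdd_below_def)
    have c1: "continuous_on {0..T} (\<lambda>s. pd s - \<phi> s)"
      by (rule continuous_on_diff[OF continuous_on_subset[OF cont1]]) (auto simp: \<phi>_def intro!: continuous_intros)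
    have c2: "continuous_on {0..T} (\<lambda>s. qd s - \<phi> s)"
      by (rule continuous_on_diff[OF continuous_on_subset[OF cont2]]) (auto simp: \<phi>_def intro!: continuous_intros)
    have "bad = ({0..T} \<inter> (\<lambda>s. pd s - \<phi> s) -` {0..}) \<union> ({0..T} \<inter> (\<lambda>s. qd s - \<phi> s) -` {0..})"
      by (auto simp: bad_def)
    moreover have "closed ({0..T} \<inter> (\<lambda>s. pd s - \<phi> s) -` {0..})"
      by (rule continuous_closed_preimage[OF c1]) auto
    moreover have "closed ({0..T} \<inter> (\<lambda>s. qd s - \<phi> s) -` {0..})"
      by (rule continuous_closed_preimage[OF c2]) auto
    ultimately have cl: "closed bad" by (metis closed_Un)
    define t1 where "t1 = Inf bad"
    have t1bad: "t1 \<in> bad" unfolding t1_def by (rule closed_contains_Inf[OF ne bdd cl])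
    have below: "pd s < \<phi> s \<and> qd s < \<phi> s" if "0 \<le> s" "s < t1" for s
    proof (rule ccontr)
      assume "\<not> ?thesis"
      then have "s \<in> bad" using that t1bad by (auto simp: bad_def)
      then have "t1 \<le> s" unfolding t1_def by (rule cInf_lower[OF _ bdd])
      then show False using that by simp
    qed
    have "t1 \<noteq> 0"
    proof
      assume "t1 = 0"
      then have "pd 0 \<ge> \<phi> 0 \<or> qd 0 \<ge> \<phi> 0" using t1bad by (auto simp: bad_def)
      then show False using init \<phi>pos[of 0] by linarith
    qed
    then have t1pos: "t1 > 0" using t1bad by (auto simp: bad_def)
    have D1: "((\<lambda>s. pd s - \<phi> s) has_real_derivative pd' t1 - Kb * \<phi> t1) (at t1)"
      by (intro derivative_intros der1 t1pos \<phi>der)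
    have D2: "((\<lambda>s. qd s - \<phi> s) has_real_derivative qd' t1 - Kb * \<phi> t1) (at t1)"
      by (intro derivative_intros der2 t1pos \<phi>der)
    have le1: "pd t1 - \<phi> t1 \<le> 0"
      proof (rule left_le[where h="\<lambda>s. pd s - \<phi> s", OF DERIV_isCont[OF D1] t1pos])
      fix s :: real assume "0 \<le> s" "s < t1"
      from below[OF this] show "pd s - \<phi> s < 0" by linarith
    qed
    have le2: "qd t1 - \<phi> t1 \<le> 0"
      proof (rule left_le[where h="\<lambda>s. qd s - \<phi> s", OF DERIV_isCont[OF D2] t1pos])
      fix s :: real assume "0 \<le> s" "s < t1"
      from below[OF this] show "qd s - \<phi> s < 0" by linarith
    qed
    have bnd: "K * (max 0 (pd t1) + max 0 (qd t1)) \<le> K * (2 * \<phi> t1)"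
      using le1 le2 \<phi>pos[of t1] K by (intro mult_left_mono) auto
    have KK: "K * (2 * \<phi> t1) < Kb * \<phi> t1" using \<phi>pos[of t1] by (simp add: Kb_def algebra_simps)
    show False
    proof (cases "pd t1 \<ge> \<phi> t1")
      case True
      have "pd' t1 - Kb * \<phi> t1 \<ge> 0"
        by (rule left_deriv[OF D1 t1pos]) (use True below in auto)
      moreover have "pd' t1 \<le> K * (max 0 (pd t1) + max 0 (qd t1))"
        using b1[OF t1pos] True \<phi>pos[of t1] by auto
      ultimately show False using bnd KK by linarith
    next
      case False
      then have T2: "qd t1 \<ge> \<phi> t1" using t1bad by (auto simp: bad_def)
      have "qd' t1 - Kb * \<phi> t1 \<ge> 0"
        by (rule left_deriv[OF D2 t1pos]) (use T2 below in auto)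
      moreover have "qd' t1 \<le> K * (max 0 (pd t1) + max 0 (qd t1))"
        using b2[OF t1pos] T2 \<phi>pos[of t1] by auto
      ultimately show False using bnd KK by linarith
    qed
  qed
  show ?thesis
  proof (rule ccontr)
    assume "\<not> ?thesis"
    then have "pd t > 0 \<or> qd t > 0" by linarith
    then obtain v where v: "v > 0" "v = pd t \<or> v = qd t" by blast
    define e where "e = v / exp (Kb * t)"
    have "e > 0" using v by (simp add: e_def)
    from claim[OF this t] t have "pd t < e * exp (Kb * t) \<and> qd t < e * exp (Kb * t)" by auto
    moreover have "e * exp (Kb * t) = v" by (simp add: e_def)
    ultimately show False using v by auto
  qed
qed


lemma vd_fst: "(x has_vector_derivative v) F \<Longrightarrow> ((\<lambda>t. fst (x t)) has_real_derivative fst v) F"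
  unfolding has_real_derivative_iff_has_vector_derivative has_vector_derivative_def
  by (drule has_derivative_fst) simp

lemma vd_snd: "(x has_vector_derivative v) F \<Longrightarrow> ((\<lambda>t. snd (x t)) has_real_derivative snd v) F"
  unfolding has_real_derivative_iff_has_vector_derivative has_vector_derivative_def
  by (drule has_derivative_snd) simp

lemma supply_lip:
  assumes "C < B" "F > 0"
  shows "\<bar>supply_fn B C F a - supply_fn B C F b\<bar> \<le> F / (B - C) * \<bar>a - b\<bar>"
proof -
  have BC: "B - C > 0" using assms by simp
  have k: "F / (B - C) > 0" using BC assms by simp
  have e: "F = F / (B - C) * (B - C)" using BC by simp
  consider "a < C" "b < C" | "a < C" "\<not> b < C" | "\<not> a < C" "b < C" | "\<not> a < C" "\<not> b < C" by blast
  then show ?thesis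
  proof cases
    case 1
    have "F / (B - C) * \<bar>a - b\<bar> \<ge> 0" by (rule mult_nonneg_nonneg) (use k in auto)
    moreover have "supply_fn B C F a - supply_fn B C F b = 0" using 1 by (simp add: supply_fn_def)
    ultimately show ?thesis by linarith
  next
    case 2
    have "supply_fn B C F a - supply_fn B C F b = F / (B - C) * (b - C)"
      using 2 using BC by (simp add: supply_fn_def field_simps)
    moreover have "F / (B - C) * (b - C) \<le> F / (B - C) * \<bar>a - b\<bar>"
      using 2 k by (intro mult_left_mono) auto
    moreover have "F / (B - C) * (b - C) \<ge> 0" by (rule mult_nonneg_nonneg) (use 2 k in auto)
    ultimately show ?thesis by (smt (verit))
  next
    case 3
    have "supply_fn B C F b - supply_fn B C F a = F / (B - C) * (a - C)"
      using 3 using BC by (simp add: supply_fn_def field_simps)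
    moreover have "F / (B - C) * (a - C) \<le> F / (B - C) * \<bar>a - b\<bar>"
      using 3 k by (intro mult_left_mono) auto
    moreover have "F / (B - C) * (a - C) \<ge> 0" by (rule mult_nonneg_nonneg) (use 3 k in auto)
    ultimately show ?thesis by (smt (verit))
  next
    case 4
    have e1: "supply_fn B C F a = F / (B - C) * (B - a)" "supply_fn B C F b = F / (B - C) * (B - b)"
      using 4 by (simp_all add: supply_fn_def)
    have "supply_fn B C F a - supply_fn B C F b = F / (B - C) * ((B - a) - (B - b))"
      unfolding e1 by (simp only: right_diff_distrib)
    also have "(B - a) - (B - b) = b - a" by simp
    finally have "supply_fn B C F a - supply_fn B C F b = F / (B - C) * (b - a)" .
    then show ?thesis by (simp only: abs_mult abs_of_pos[OF k] abs_minus_commute)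
  qed
qed

lemma demand_lip:
  assumes "C > 0" "F > 0"
  shows "\<bar>demand_fn C F a - demand_fn C F b\<bar> \<le> F / C * \<bar>a - b\<bar>"
proof -
  have k: "F / C > 0" using assms by simp
  have e: "F = F / C * C" using assms by simp
  consider "a < C" "b < C" | "a < C" "\<not> b < C" | "\<not> a < C" "b < C" | "\<not> a < C" "\<not> b < C" by blast
  then show ?thesis
  proof cases
    case 1
    have "demand_fn C F a - demand_fn C F b = F / C * (a - b)"
      using 1 unfolding demand_fn_def by (simp add: right_diff_distrib)
    then show ?thesis by (simp only: abs_mult abs_of_pos[OF k])
  next
    case 2
    have "demand_fn C F b - demand_fn C F a = F / C * (C - a)"
      using 2 using assms by (simp add: demand_fn_def field_simps)
    moreover have "F / C * (C - a) \<le> F / C * \<bar>a - b\<bar>"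
      using 2 k by (intro mult_left_mono) auto
    moreover have "F / C * (C - a) \<ge> 0" by (rule mult_nonneg_nonneg) (use 2 k in auto)
    ultimately show ?thesis by (smt (verit))
  next
    case 3
    have "demand_fn C F a - demand_fn C F b = F / C * (C - b)"
      using 3 using assms by (simp add: demand_fn_def field_simps)
    moreover have "F / C * (C - b) \<le> F / C * \<bar>a - b\<bar>"
      using 3 k by (intro mult_left_mono) auto
    moreover have "F / C * (C - b) \<ge> 0" by (rule mult_nonneg_nonneg) (use 3 k in auto)
    ultimately show ?thesis by (smt (verit))
  next
    case 4
    have "F / C * \<bar>a - b\<bar> \<ge> 0" by (rule mult_nonneg_nonneg) (use k in auto)
    moreover have "demand_fn C F a - demand_fn C F b = 0" using 4 by (simp add: demand_fn_def)
    ultimately show ?thesis by linarith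
  qed
qed

lemma mono_via_deriv:
  fixes g \<tau> :: "real \<Rightarrow> real"
  assumes c: "continuous_on {0..B} \<tau>" and sm: "strict_mono_on {0..B} \<tau>"
    and d: "\<And>v. v \<in> {0..B} \<Longrightarrow> \<exists>d>0. (g has_real_derivative d) (at (\<tau> v))"
    and s: "0 \<le> s" "s \<le> s'" "s' \<le> B"
  shows "g (\<tau> s) \<le> g (\<tau> s')"
proof -
  have le: "\<tau> s \<le> \<tau> s'"
  proof (cases "s = s'")
    case False then show ?thesis using s strict_mono_onD[OF sm, of s s'] by auto
  qed simp
  have pre: "\<exists>v\<in>{0..B}. \<tau> v = u" if "\<tau> s \<le> u" "u \<le> \<tau> s'" for u
  proof -
    have "continuous_on {s..s'} \<tau>" by (rule continuous_on_subset[OF c]) (use s in auto)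
    from IVT'[of \<tau> s u s', OF that s(2) this] obtain v where "s \<le> v" "v \<le> s'" "\<tau> v = u" by blast
    then show ?thesis using s by auto
  qed
  have dd: "\<exists>d>0. (g has_real_derivative d) (at u)" if "\<tau> s \<le> u" "u \<le> \<tau> s'" for u
    using pre[OF that] d by blast
  show ?thesis
  proof (rule DERIV_nonneg_imp_increasing_open[OF le])
    fix u assume u: "\<tau> s < u" "u < \<tau> s'"
    have "\<exists>d>0. (g has_real_derivative d) (at u)" by (rule dd) (use u in auto)
    then obtain d where "d > 0" "(g has_real_derivative d) (at u)" by blast
    then show "\<exists>y. (g has_real_derivative y) (at u) \<and> 0 \<le> y" by auto
  next
    show "continuous_on {\<tau> s..\<tau> s'} g"
    proof (rule continuous_at_imp_continuous_on, rule ballI)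
      fix u assume u: "u \<in> {\<tau> s..\<tau> s'}"
      have "\<exists>d>0. (g has_real_derivative d) (at u)" by (rule dd) (use u in auto)
      then obtain d where "(g has_real_derivative d) (at u)" by blast
      then show "isCont g u" by (rule DERIV_isCont)
    qed
  qed
qed

lemma key:
  fixes R :: "real \<Rightarrow> real \<Rightarrow> real" and S D :: "real \<Rightarrow> real"
  assumes monoR: "\<And>a b b'. a\<in>{0..Ba} \<Longrightarrow> b\<in>{0..Bb} \<Longrightarrow> b'\<in>{0..Bb} \<Longrightarrow> b \<le> b' \<Longrightarrow> R a b \<le> R a b'"
    and lipR: "\<And>a b a' b'. a\<in>{0..Ba} \<Longrightarrow> b\<in>{0..Bb} \<Longrightarrow> a'\<in>{0..Ba} \<Longrightarrow> b'\<in>{0..Bb} \<Longrightarrow>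
                 \<bar>R a b - R a' b'\<bar> \<le> LR * (\<bar>a - a'\<bar> + \<bar>b - b'\<bar>)"
    and lipS: "\<And>a a'. \<bar>S a - S a'\<bar> \<le> LS * \<bar>a - a'\<bar>"
    and lipD: "\<And>a a'. \<bar>D a - D a'\<bar> \<le> LD * \<bar>a - a'\<bar>"
    and L: "LR \<ge> 0" "LS \<ge> 0" "LD \<ge> 0"
    and pts: "a\<in>{0..Ba}" "a'\<in>{0..Ba}" "b\<in>{0..Bb}" "b'\<in>{0..Bb}" "a \<ge> a'"
  shows "(min (R a b) (S a) - D a) - (min (R a' b') (S a') - D a')
           \<le> (LR + LS + LD) * (max 0 (a - a') + max 0 (b - b'))"
proof -
  define m where "m = max b b'"
  have m: "m \<in> {0..Bb}" "b \<le> m" using pts by (auto simp: m_def)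
  have "R a b \<le> R a m" by (rule monoR) (use pts m in auto)
  then have 1: "min (R a b) (S a) \<le> min (R a m) (S a)" by linarith
  have 2: "\<bar>R a m - R a' b'\<bar> \<le> LR * (\<bar>a - a'\<bar> + \<bar>m - b'\<bar>)"
    by (rule lipR) (use pts m in auto)
  have 3: "min (R a m) (S a) - min (R a' b') (S a') \<le> \<bar>R a m - R a' b'\<bar> + \<bar>S a - S a'\<bar>"
    by linarith
  have P1: "\<bar>a - a'\<bar> = max 0 (a - a')" using pts by auto
  have P2: "\<bar>m - b'\<bar> = max 0 (b - b')" by (auto simp: m_def)
  define X where "X = max 0 (a - a')"
  define Y where "Y = max 0 (b - b')"
  have XY: "X \<ge> 0" "Y \<ge> 0" by (auto simp: X_def Y_def)
  have "(min (R a b) (S a) - D a) - (min (R a' b') (S a') - D a')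
        \<le> LR * (X + Y) + LS * X + LD * X"
  proof -
    have 2: "\<bar>R a m - R a' b'\<bar> \<le> LR * (X + Y)" using 2 P1 P2 by (simp add: X_def Y_def)
    have 4: "\<bar>S a - S a'\<bar> \<le> LS * X" using lipS[of a a'] P1 by (simp add: X_def)
    have 5: "D a' - D a \<le> LD * X" using lipD[of a a'] P1 unfolding X_def by linarith
    show ?thesis using 1 2 3 4 5 by linarith
  qed
  also have "\<dots> \<le> (LR + LS + LD) * (X + Y)"
    using XY L by (simp add: algebra_simps mult_nonneg_nonneg)
  finally show ?thesis unfolding X_def Y_def .
qed


theorem proposition1:
  fixes B1 C1 F1 B2 C2 F2 \<phi> \<alpha> r01 r02 :: real
    and r1 r2 :: "real \<Rightarrow> real \<Rightarrow> real"
    and \<tau>1 \<tau>2 :: "real \<Rightarrow> real"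
    and x0 y0 :: "real \<times> real"
    and x y :: "real \<Rightarrow> real \<times> real"
  assumes pos: "B1 > 0" "C1 > 0" "F1 > 0" "B2 > 0" "C2 > 0" "F2 > 0" "\<phi> > 0"
    and CB: "C1 < B1" "C2 < B2"
    and alpha: "0 < \<alpha>" "\<alpha> \<le> 1"
    and r0: "r01 \<ge> 0" "r02 \<ge> 0" "r01 + r02 = 1"
    and A1: "\<phi> < F1 + F2"
    and tau_C1: "\<tau>1 C1_differentiable_on {0..B1}" "\<tau>2 C1_differentiable_on {0..B2}"
    and tau_mono: "strict_mono_on {0..B1} \<tau>1" "strict_mono_on {0..B2} \<tau>2"
    and r_bounds: "\<forall>z\<in>Omega B1 B2. 0 \<le> r1 (\<tau>1 (fst z)) (\<tau>2 (snd z)) \<and> r1 (\<tau>1 (fst z)) (\<tau>2 (snd z)) \<le> 1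
                                  \<and> 0 \<le> r2 (\<tau>1 (fst z)) (\<tau>2 (snd z)) \<and> r2 (\<tau>1 (fst z)) (\<tau>2 (snd z)) \<le> 1
                                  \<and> r1 (\<tau>1 (fst z)) (\<tau>2 (snd z)) + r2 (\<tau>1 (fst z)) (\<tau>2 (snd z)) = 1"
    and r_lip: "\<exists>L. lipschitz_on L (Omega B1 B2) (\<lambda>z. r1 (\<tau>1 (fst z)) (\<tau>2 (snd z)))"
               "\<exists>L. lipschitz_on L (Omega B1 B2) (\<lambda>z. r2 (\<tau>1 (fst z)) (\<tau>2 (snd z)))"
    and r_C1: "C1_on (Omega B1 B2) (\<lambda>z. r1 (\<tau>1 (fst z)) (\<tau>2 (snd z)))"
              "C1_on (Omega B1 B2) (\<lambda>z. r2 (\<tau>1 (fst z)) (\<tau>2 (snd z)))"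
    and A4: "\<forall>z\<in>Omega B1 B2. \<exists>d>0.
               ((\<lambda>s. \<alpha> * r1 (\<tau>1 (fst z)) s) has_real_derivative d) (at (\<tau>2 (snd z)))"
            "\<forall>z\<in>Omega B1 B2. \<exists>d>0.
               ((\<lambda>s. \<alpha> * r2 s (\<tau>2 (snd z))) has_real_derivative d) (at (\<tau>1 (fst z)))"
    and A5: "F1 > (1 - \<alpha>) * \<phi> * r01" "F2 > (1 - \<alpha>) * \<phi> * r02"
    and A6: "\<phi> < (F1 / C1) * B1" "\<phi> < (F2 / C2) * B2"
    and init: "x0 \<in> Omega B1 B2" "y0 \<in> Omega B1 B2" "fst x0 \<le> fst y0" "snd x0 \<le> snd y0"
    and solx: "is_solution (traffic_field B1 C1 F1 B2 C2 F2 \<phi> \<alpha> r01 r02 r1 r2 \<tau>1 \<tau>2) (Omega B1 B2) x0 x"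
    and soly: "is_solution (traffic_field B1 C1 F1 B2 C2 F2 \<phi> \<alpha> r01 r02 r1 r2 \<tau>1 \<tau>2) (Omega B1 B2) y0 y"
  shows "\<forall>t\<ge>0. fst (x t) \<le> fst (y t) \<and> snd (x t) \<le> snd (y t)"
proof -
  define f where "f = traffic_field B1 C1 F1 B2 C2 F2 \<phi> \<alpha> r01 r02 r1 r2 \<tau>1 \<tau>2"
  define R1 where "R1 = (\<lambda>a b. \<phi> * routing \<alpha> r01 r1 \<tau>1 \<tau>2 (a, b))"
  define R2 where "R2 = (\<lambda>a b. \<phi> * routing \<alpha> r02 r2 \<tau>1 \<tau>2 (b, a))"
  have f1: "fst (f z) = min (R1 (fst z) (snd z)) (supply_fn B1 C1 F1 (fst z)) - demand_fn C1 F1 (fst z)" for z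
    by (simp add: f_def traffic_field_def R1_def)
  have f2: "snd (f z) = min (R2 (snd z) (fst z)) (supply_fn B2 C2 F2 (snd z)) - demand_fn C2 F2 (snd z)" for z
    by (simp add: f_def traffic_field_def R2_def)
  have Om: "z \<in> Omega B1 B2 \<longleftrightarrow> fst z \<in> {0..B1} \<and> snd z \<in> {0..B2}" for z
    by (cases z) (simp add: Omega_def)
  have cont\<tau>1: "continuous_on {0..B1} \<tau>1" by (rule C1_differentiable_imp_continuous_on[OF tau_C1(1)])
  have cont\<tau>2: "continuous_on {0..B2} \<tau>2" by (rule C1_differentiable_imp_continuous_on[OF tau_C1(2)])
  have \<phi>\<alpha>: "\<phi> * \<alpha> > 0" using pos alpha by simp
  have monoR1: "R1 a b \<le> R1 a b'" if "a\<in>{0..B1}" "b\<in>{0..B2}" "b'\<in>{0..B2}" "b \<le> b'" for a b b'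
  proof -
    have "(\<lambda>s. \<alpha> * r1 (\<tau>1 a) s) (\<tau>2 b) \<le> (\<lambda>s. \<alpha> * r1 (\<tau>1 a) s) (\<tau>2 b')"
    proof (rule mono_via_deriv[OF cont\<tau>2 tau_mono(2)])
      fix v assume "v \<in> {0..B2}"
      then have "(a, v) \<in> Omega B1 B2" using that by (simp add: Om)
      from A4(1)[rule_format, OF this]
      show "\<exists>d>0. ((\<lambda>s. \<alpha> * r1 (\<tau>1 a) s) has_real_derivative d) (at (\<tau>2 v))" by simp
    qed (use that in auto)
    then show ?thesis unfolding R1_def routing_def fst_conv snd_conv
      by (rule mult_left_mono[OF add_left_mono]) (use pos(7) in auto)
  qed
  have monoR2: "R2 a b \<le> R2 a b'" if "a\<in>{0..B2}" "b\<in>{0..B1}" "b'\<in>{0..B1}" "b \<le> b'" for a b b'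
  proof -
    have "(\<lambda>s. \<alpha> * r2 s (\<tau>2 a)) (\<tau>1 b) \<le> (\<lambda>s. \<alpha> * r2 s (\<tau>2 a)) (\<tau>1 b')"
    proof (rule mono_via_deriv[OF cont\<tau>1 tau_mono(1)])
      fix v assume "v \<in> {0..B1}"
      then have "(v, a) \<in> Omega B1 B2" using that by (simp add: Om)
      from A4(2)[rule_format, OF this]
      show "\<exists>d>0. ((\<lambda>s. \<alpha> * r2 s (\<tau>2 a)) has_real_derivative d) (at (\<tau>1 v))" by simp
    qed (use that in auto)
    then show ?thesis unfolding R2_def routing_def fst_conv snd_conv
      by (rule mult_left_mono[OF add_left_mono]) (use pos(7) in auto)
  qed
  have distle: "dist (a, b) (a', b') \<le> \<bar>a - a'\<bar> + \<bar>b - b'\<bar>" for a b a' b' :: real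
    using sqrt_sum_squares_le_sum_abs[of "a - a'" "b - b'"]
    by (simp add: dist_Pair_Pair dist_real_def)
  obtain L1 where L1: "lipschitz_on L1 (Omega B1 B2) (\<lambda>z. r1 (\<tau>1 (fst z)) (\<tau>2 (snd z)))"
    using r_lip(1) by blast
  obtain L2 where L2: "lipschitz_on L2 (Omega B1 B2) (\<lambda>z. r2 (\<tau>1 (fst z)) (\<tau>2 (snd z)))"
    using r_lip(2) by blast
  have L1nn: "L1 \<ge> 0" and L2nn: "L2 \<ge> 0" using L1 L2 by (auto simp: lipschitz_on_def)
  have lipR1: "\<bar>R1 a b - R1 a' b'\<bar> \<le> (\<phi> * \<alpha> * L1) * (\<bar>a - a'\<bar> + \<bar>b - b'\<bar>)"
    if "a\<in>{0..B1}" "b\<in>{0..B2}" "a'\<in>{0..B1}" "b'\<in>{0..B2}" for a b a' b'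
  proof -
    have AB: "(a, b) \<in> Omega B1 B2" "(a', b') \<in> Omega B1 B2" using that by (simp_all add: Om)
    then have "dist (r1 (\<tau>1 a) (\<tau>2 b)) (r1 (\<tau>1 a') (\<tau>2 b')) \<le> L1 * dist (a, b) (a', b')"
    proof -
      have "\<forall>u\<in>Omega B1 B2. \<forall>v\<in>Omega B1 B2. dist (r1 (\<tau>1 (fst u)) (\<tau>2 (snd u))) (r1 (\<tau>1 (fst v)) (\<tau>2 (snd v))) \<le> L1 * dist u v"
        using L1 by (simp add: lipschitz_on_def)
      from this[rule_format, OF AB] show ?thesis by simp
    qed
    also have "\<dots> \<le> L1 * (\<bar>a - a'\<bar> + \<bar>b - b'\<bar>)" by (rule mult_left_mono[OF distle L1nn])
    finally have d: "\<bar>r1 (\<tau>1 a) (\<tau>2 b) - r1 (\<tau>1 a') (\<tau>2 b')\<bar> \<le> L1 * (\<bar>a - a'\<bar> + \<bar>b - b'\<bar>)"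
      by (simp add: dist_real_def)
    have "R1 a b - R1 a' b' = (\<phi> * \<alpha>) * (r1 (\<tau>1 a) (\<tau>2 b) - r1 (\<tau>1 a') (\<tau>2 b'))"
      by (simp add: R1_def routing_def algebra_simps)
    then have "\<bar>R1 a b - R1 a' b'\<bar> = (\<phi> * \<alpha>) * \<bar>r1 (\<tau>1 a) (\<tau>2 b) - r1 (\<tau>1 a') (\<tau>2 b')\<bar>"
      using pos(7) alpha(1) by (simp add: abs_mult)
    also have "\<dots> \<le> (\<phi> * \<alpha>) * (L1 * (\<bar>a - a'\<bar> + \<bar>b - b'\<bar>))"
      by (rule mult_left_mono[OF d]) (use \<phi>\<alpha> in simp)
    finally show ?thesis by (simp only: mult.assoc)
  qed
  have lipR2: "\<bar>R2 a b - R2 a' b'\<bar> \<le> (\<phi> * \<alpha> * L2) * (\<bar>a - a'\<bar> + \<bar>b - b'\<bar>)"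
    if "a\<in>{0..B2}" "b\<in>{0..B1}" "a'\<in>{0..B2}" "b'\<in>{0..B1}" for a b a' b'
  proof -
    have AB: "(b, a) \<in> Omega B1 B2" "(b', a') \<in> Omega B1 B2" using that by (simp_all add: Om)
    then have "dist (r2 (\<tau>1 b) (\<tau>2 a)) (r2 (\<tau>1 b') (\<tau>2 a')) \<le> L2 * dist (b, a) (b', a')"
    proof -
      have "\<forall>u\<in>Omega B1 B2. \<forall>v\<in>Omega B1 B2. dist (r2 (\<tau>1 (fst u)) (\<tau>2 (snd u))) (r2 (\<tau>1 (fst v)) (\<tau>2 (snd v))) \<le> L2 * dist u v"
        using L2 by (simp add: lipschitz_on_def)
      from this[rule_format, OF AB] show ?thesis by simp
    qed
    also have "\<dots> \<le> L2 * (\<bar>a - a'\<bar> + \<bar>b - b'\<bar>)"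
      using mult_left_mono[OF distle[of b a b' a'] L2nn] by (simp only: add.commute[of "\<bar>b - b'\<bar>"])
    finally have d: "\<bar>r2 (\<tau>1 b) (\<tau>2 a) - r2 (\<tau>1 b') (\<tau>2 a')\<bar> \<le> L2 * (\<bar>a - a'\<bar> + \<bar>b - b'\<bar>)"
      by (simp add: dist_real_def)
    have "R2 a b - R2 a' b' = (\<phi> * \<alpha>) * (r2 (\<tau>1 b) (\<tau>2 a) - r2 (\<tau>1 b') (\<tau>2 a'))"
      by (simp add: R2_def routing_def algebra_simps)
    then have "\<bar>R2 a b - R2 a' b'\<bar> = (\<phi> * \<alpha>) * \<bar>r2 (\<tau>1 b) (\<tau>2 a) - r2 (\<tau>1 b') (\<tau>2 a')\<bar>"
      using pos(7) alpha(1) by (simp add: abs_mult)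
    also have "\<dots> \<le> (\<phi> * \<alpha>) * (L2 * (\<bar>a - a'\<bar> + \<bar>b - b'\<bar>))"
      by (rule mult_left_mono[OF d]) (use \<phi>\<alpha> in simp)
    finally show ?thesis by (simp only: mult.assoc)
  qed
  define K1 where "K1 = \<phi> * \<alpha> * L1 + F1 / (B1 - C1) + F1 / C1"
  define K2 where "K2 = \<phi> * \<alpha> * L2 + F2 / (B2 - C2) + F2 / C2"
  have K1nn: "K1 \<ge> 0" unfolding K1_def using \<phi>\<alpha> L1nn pos CB by (simp add: add_nonneg_nonneg)
  have K2nn: "K2 \<ge> 0" unfolding K2_def using \<phi>\<alpha> L2nn pos CB by (simp add: add_nonneg_nonneg)
  have LRnn1: "0 \<le> \<phi> * \<alpha> * L1" by (rule mult_nonneg_nonneg) (use \<phi>\<alpha> L1nn in auto)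
  have LSnn1: "0 \<le> F1 / (B1 - C1)" using pos(3) CB(1) by simp
  have LDnn1: "0 \<le> F1 / C1" using pos(2) pos(3) by simp
  have key1: "fst (f p) - fst (f q) \<le> K1 * (max 0 (fst p - fst q) + max 0 (snd p - snd q))"
    if "p \<in> Omega B1 B2" "q \<in> Omega B1 B2" "fst p \<ge> fst q" for p q
    unfolding f1 K1_def
    by (rule key[where R=R1, OF monoR1 lipR1 supply_lip[OF CB(1) pos(3)] demand_lip[OF pos(2) pos(3)] LRnn1 LSnn1 LDnn1])
       (use that in \<open>auto simp: Om\<close>)
  have LRnn2: "0 \<le> \<phi> * \<alpha> * L2" by (rule mult_nonneg_nonneg) (use \<phi>\<alpha> L2nn in auto)
  have LSnn2: "0 \<le> F2 / (B2 - C2)" using pos(6) CB(2) by simp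
  have LDnn2: "0 \<le> F2 / C2" using pos(5) pos(6) by simp
  have key2: "snd (f p) - snd (f q) \<le> K2 * (max 0 (fst p - fst q) + max 0 (snd p - snd q))"
    if "p \<in> Omega B1 B2" "q \<in> Omega B1 B2" "snd p \<ge> snd q" for p q
    unfolding f2 K2_def add.commute[of "max 0 (fst p - fst q)"]
    by (rule key[where R=R2, OF monoR2 lipR2 supply_lip[OF CB(2) pos(6)] demand_lip[OF pos(5) pos(6)] LRnn2 LSnn2 LDnn2])
       (use that in \<open>auto simp: Om\<close>)
  have xs: "x 0 = x0" "\<And>t. t \<ge> 0 \<Longrightarrow> x t \<in> Omega B1 B2 \<and> (x has_vector_derivative f (x t)) (at t within {0..})"
    using solx by (auto simp: is_solution_def f_def)
  have ys: "y 0 = y0" "\<And>t. t \<ge> 0 \<Longrightarrow> y t \<in> Omega B1 B2 \<and> (y has_vector_derivative f (y t)) (at t within {0..})"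
    using soly by (auto simp: is_solution_def f_def)
  have atder: "(z has_vector_derivative f (z t)) (at t)"
    if "t > 0" "(z has_vector_derivative f (z t)) (at t within {0..})" for z :: "real \<Rightarrow> real \<times> real" and t
  proof -
    have "(z has_vector_derivative f (z t)) (at t within {0<..})"
      by (rule has_vector_derivative_within_subset[OF that(2)]) auto
    then show ?thesis using at_within_open[of t "{0<..}"] that(1) by simp
  qed
  have dx: "(x has_vector_derivative f (x t)) (at t)" if "t > 0" for t
    using atder[OF that conjunct2[OF xs(2)]] that by simp
  have dy: "(y has_vector_derivative f (y t)) (at t)" if "t > 0" for t
    using atder[OF that conjunct2[OF ys(2)]] that by simp
  have cx: "continuous_on {0..} x"
    unfolding continuous_on_eq_continuous_within
  proof
    fix t :: real assume "t \<in> {0..}"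
    then show "continuous (at t within {0..}) x"
      by (intro has_vector_derivative_continuous[of x "f (x t)"]) (use xs(2) in auto)
  qed
  have cy: "continuous_on {0..} y"
    unfolding continuous_on_eq_continuous_within
  proof
    fix t :: real assume "t \<in> {0..}"
    then show "continuous (at t within {0..}) y"
      by (intro has_vector_derivative_continuous[of y "f (y t)"]) (use ys(2) in auto)
  qed
  define K where "K = K1 + K2"
  show ?thesis
  proof (intro allI impI)
    fix t :: real assume t: "t \<ge> 0"
    have "fst (x t) - fst (y t) \<le> 0 \<and> snd (x t) - snd (y t) \<le> 0"
    proof (rule comparison[where t=t and pd="\<lambda>t. fst (x t) - fst (y t)" and qd="\<lambda>t. snd (x t) - snd (y t)" and K=K and pd'="\<lambda>t. fst (f (x t)) - fst (f (y t))"
                                 and qd'="\<lambda>t. snd (f (x t)) - snd (f (y t))"])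
      show "K \<ge> 0" using K1nn K2nn by (simp add: K_def)
      show "((\<lambda>t. fst (x t) - fst (y t)) has_real_derivative fst (f (x t)) - fst (f (y t))) (at t)"
        if "t > 0" for t
        by (rule DERIV_diff[OF vd_fst[OF dx[OF that]] vd_fst[OF dy[OF that]]])
      show "((\<lambda>t. snd (x t) - snd (y t)) has_real_derivative snd (f (x t)) - snd (f (y t))) (at t)"
        if "t > 0" for t
        by (rule DERIV_diff[OF vd_snd[OF dx[OF that]] vd_snd[OF dy[OF that]]])
      show "continuous_on {0..} (\<lambda>t. fst (x t) - fst (y t))"
        by (rule continuous_on_diff[OF continuous_on_fst[OF cx] continuous_on_fst[OF cy]])
      show "continuous_on {0..} (\<lambda>t. snd (x t) - snd (y t))"
        by (rule continuous_on_diff[OF continuous_on_snd[OF cx] continuous_on_snd[OF cy]])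
      show "fst (x 0) - fst (y 0) \<le> 0" "snd (x 0) - snd (y 0) \<le> 0"
        using init xs(1) ys(1) by auto
      show "fst (f (x s)) - fst (f (y s))
              \<le> K * (max 0 (fst (x s) - fst (y s)) + max 0 (snd (x s) - snd (y s)))"
        if "s > 0" "fst (x s) - fst (y s) \<ge> 0" for s
      proof -
        have M: "max 0 (fst (x s) - fst (y s)) + max 0 (snd (x s) - snd (y s)) \<ge> 0" by simp
        have "fst (f (x s)) - fst (f (y s))
              \<le> K1 * (max 0 (fst (x s) - fst (y s)) + max 0 (snd (x s) - snd (y s)))"
        proof (rule key1)
          show "x s \<in> Omega B1 B2" using xs(2)[of s] that(1) by simp
          show "y s \<in> Omega B1 B2" using ys(2)[of s] that(1) by simp
          show "fst (y s) \<le> fst (x s)" using that(2) by simp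
        qed
        also have "\<dots> \<le> K * (max 0 (fst (x s) - fst (y s)) + max 0 (snd (x s) - snd (y s)))"
          by (rule mult_right_mono[OF _ M]) (use K2nn in \<open>simp add: K_def\<close>)
        finally show ?thesis .
      qed
      show "snd (f (x s)) - snd (f (y s))
              \<le> K * (max 0 (fst (x s) - fst (y s)) + max 0 (snd (x s) - snd (y s)))"
        if "s > 0" "snd (x s) - snd (y s) \<ge> 0" for s
      proof -
        have M: "max 0 (fst (x s) - fst (y s)) + max 0 (snd (x s) - snd (y s)) \<ge> 0" by simp
        have "snd (f (x s)) - snd (f (y s))
              \<le> K2 * (max 0 (fst (x s) - fst (y s)) + max 0 (snd (x s) - snd (y s)))"
        proof (rule key2)
          show "x s \<in> Omega B1 B2" using xs(2)[of s] that(1) by simp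
          show "y s \<in> Omega B1 B2" using ys(2)[of s] that(1) by simp
          show "snd (y s) \<le> snd (x s)" using that(2) by simp
        qed
        also have "\<dots> \<le> K * (max 0 (fst (x s) - fst (y s)) + max 0 (snd (x s) - snd (y s)))"
          by (rule mult_right_mono[OF _ M]) (use K1nn in \<open>simp add: K_def\<close>)
        finally show ?thesis .
      qed
    qed (rule t)
    then show "fst (x t) \<le> fst (y t) \<and> snd (x t) \<le> snd (y t)" by simp
  qed
qed

end
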